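(* Let $k$ be a field of characteristic $0$ containing a primitive fifth root of unity. For $\underline{a}=(a_1,\ldots,a_7)\in k^7$ let $$F_{\underline{a}}=a_1x_0^3 + a_2x_0x_1x_4 + a_3x_0x_2x_3 + a_4x_1^2x_3 + a_5x_1x_2^2 + a_6x_2x_4^2+a_7x_3^2x_4 .$$ Define $$\begin{aligned}\Delta(\underline{a}):=\;& a^4_2 a^5_3 a_4 a_6 + 8 a_1 a^2_2 a^4_3 a^2_4 a^2_6 + 16 a^2_1 a^3_3 a^3_4 a^3_6 + a^5_2 a^4_3 a_5 a_7 + 15 a_1 a^3_2 a^3_3 a_4 a_5 a_6 a_7\\ &+ 12 a^2_1 a_2 a^2_3 a^2_4 a_5 a^2_6 a_7 + 8 a_1 a^4_2 a^2_3 a^2_5 a^2_7 + 12 a^2_1 a^2_2 a_3 a_4 a^2_5 a_6 a^2_7 + 27 a^3_1 a^2_4 a^2_5 a^2_6 a^2_7 + 16 a^2_1 a^3_2 a^3_5 a^3_7\end{aligned}$$ and $D(\underline{a})=a_1a_4a_5a_6a_7\,\Delta(\underline{a})$. Then the equation $F_{\underline{a}}=0$ defines a smooth cubic threefold in $\mathbb{P}^4$ if and only if $D(\underline{a})\neq 0$.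
   Context: $(x_0:\ldots:x_4)$ are homogeneous coordinates on $\mathbb{P}^4$. *)

theory Defs
  imports "HOL-Algebra.Algebraic_Closure_Type"
begin

definition cubicF :: "(nat \<Rightarrow> 'b::comm_ring_1) \<Rightarrow> (nat \<Rightarrow> 'b) \<Rightarrow> 'b" where
  "cubicF c x =
     c 1 * x 0 ^ 3 + c 2 * x 0 * x 1 * x 4 + c 3 * x 0 * x 2 * x 3 + c 4 * x 1 ^ 2 * x 3
   + c 5 * x 1 * x 2 ^ 2 + c 6 * x 2 * x 4 ^ 2 + c 7 * x 3 ^ 2 * x 4"

text \<open>Formal partial derivative of F with respect to x_i at the point x:
  the coefficient of t in the polynomial F(x + t e_i).\<close>
definition cubicF_partial :: "(nat \<Rightarrow> 'b::comm_ring_1) \<Rightarrow> nat \<Rightarrow> (nat \<Rightarrow> 'b) \<Rightarrow> 'b" where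
  "cubicF_partial c i x =
     coeff (cubicF (\<lambda>j. [:c j:]) (\<lambda>j. if j = i then [:x j, 1:] else [:x j:])) 1"

definition smooth_cubic :: "(nat \<Rightarrow> 'a::field) \<Rightarrow> bool" where
  "smooth_cubic a \<longleftrightarrow>
     \<not> (\<exists>x :: nat \<Rightarrow> 'a alg_closure. (\<exists>i<5. x i \<noteq> 0) \<and>
          cubicF (\<lambda>j. to_ac (a j)) x = 0 \<and>
          (\<forall>i<5. cubicF_partial (\<lambda>j. to_ac (a j)) i x = 0))"

definition Delta7 :: "(nat \<Rightarrow> 'a::comm_ring_1) \<Rightarrow> 'a" where
  "Delta7 a =
     a 2^4 * a 3^5 * a 4 * a 6 + 8 * a 1 * a 2^2 * a 3^4 * a 4^2 * a 6^2
   + 16 * a 1^2 * a 3^3 * a 4^3 * a 6^3 + a 2^5 * a 3^4 * a 5 * a 7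
   + 15 * a 1 * a 2^3 * a 3^3 * a 4 * a 5 * a 6 * a 7
   + 12 * a 1^2 * a 2 * a 3^2 * a 4^2 * a 5 * a 6^2 * a 7
   + 8 * a 1 * a 2^4 * a 3^2 * a 5^2 * a 7^2
   + 12 * a 1^2 * a 2^2 * a 3 * a 4 * a 5^2 * a 6 * a 7^2
   + 27 * a 1^3 * a 4^2 * a 5^2 * a 6^2 * a 7^2
   + 16 * a 1^2 * a 2^3 * a 5^3 * a 7^3"

definition D7 :: "(nat \<Rightarrow> 'a::comm_ring_1) \<Rightarrow> 'a" where
  "D7 a = a 1 * a 4 * a 5 * a 6 * a 7 * Delta7 a"

end

theory Submission
  imports Defs
begin


lemma cubic_root:
  fixes d0 d1 d2 d3 :: "'b::alg_closed_field"
  assumes "d3 \<noteq> 0"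
  shows "\<exists>r. d3*r^3 + d2*r^2 + d1*r + d0 = 0"
proof -
  define f where "f = (\<lambda>k::nat. if k = 0 then d0 else if k = 1 then d1 else if k = 2 then d2 else d3)"
  have "\<exists>x. (\<Sum>k\<le>3. f k * x ^ k) = 0"
    by (rule alg_closed) (use assms in \<open>auto simp: f_def\<close>)
  then obtain r where "(\<Sum>k\<le>3. f k * r ^ k) = 0" by blast
  then have "d3*r^3 + d2*r^2 + d1*r + d0 = 0"
    by (simp add: f_def eval_nat_numeral algebra_simps)
  then show ?thesis by blast
qed

lemma quad_root:
  fixes d0 d1 d2 :: "'b::alg_closed_field"
  assumes "d2 \<noteq> 0"
  shows "\<exists>r. d2*r^2 + d1*r + d0 = 0"
proof -
  define f where "f = (\<lambda>k::nat. if k = 0 then d0 else if k = 1 then d1 else d2)"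
  have "\<exists>x. (\<Sum>k\<le>2. f k * x ^ k) = 0"
    by (rule alg_closed) (use assms in \<open>auto simp: f_def\<close>)
  then obtain r where "(\<Sum>k\<le>2. f k * r ^ k) = 0" by blast
  then have "d2*r^2 + d1*r + d0 = 0"
    by (simp add: f_def eval_nat_numeral algebra_simps)
  then show ?thesis by blast
qed

lemma vieta_roots:
  fixes Pp Qq :: "'b::alg_closed_field"
  assumes "Pp \<noteq> 0"
  shows "\<exists>r1 r2 r3. r1+r2+r3 = -2 \<and> Pp*(r1*r2+r1*r3+r2*r3) = -2*Qq \<and> Pp*(r1*r2*r3) = Qq"
proof -
  obtain r1 where f1: "Pp*r1^3 + (2*Pp)*r1^2 + (-2*Qq)*r1 + (-Qq) = 0"
    using cubic_root[OF assms] by blast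
  obtain r2 where q2: "Pp*r2^2 + (Pp*(r1+2))*r2 + (Pp*r1^2 + 2*Pp*r1 - 2*Qq) = 0"
    using quad_root[OF assms] by blast
  define r3 where "r3 = -(r1+2) - r2"
  have "r1+r2+r3 = -2" unfolding r3_def by simp
  moreover have "Pp*(r1*r2+r1*r3+r2*r3) = -2*Qq"
    using q2 unfolding r3_def by Groebner_Basis.algebra
  moreover have "Pp*(r1*r2*r3) = Qq"
    using q2 f1 unfolding r3_def by Groebner_Basis.algebra
  ultimately show ?thesis by blast
qed

lemma vieta_factor:
  fixes Pp Qq r1 r2 r3 s :: "'b::field"
  assumes "r1+r2+r3 = -2" "Pp*(r1*r2+r1*r3+r2*r3) = -2*Qq" "Pp*(r1*r2*r3) = Qq"
  shows "Pp*s^3 + 2*Pp*s^2 - 2*Qq*s - Qq = Pp*(s-r1)*(s-r2)*(s-r3)"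
  using assms by Groebner_Basis.algebra

definition gg :: "'b::field \<Rightarrow> 'b \<Rightarrow> 'b \<Rightarrow> 'b" where
  "gg al be s = al*(2*s+1)*(s+2)^2 + be*(s+1)"

lemma prod_id0:
  fixes r1 r2 r3 Pp al be :: "'b::field"
  assumes "r3 = -2-r1-r2"
  shows "Pp^3 * (gg al be r1 * gg al be r2 * gg al be r3) = be^3 * Pp^2 * (Pp*(r1*r2*r3)) + be^3 * Pp^2 * (Pp*(r1*r2+r1*r3+r2*r3)) - be^3 * Pp^3 - 4 * al * be^2 * Pp * (Pp*(r1*r2+r1*r3+r2*r3)) * (Pp*(r1*r2*r3)) - 4 * al * be^2 * Pp * (Pp*(r1*r2+r1*r3+r2*r3))^2 + 9 * al * be^2 * Pp^2 * (Pp*(r1*r2*r3)) + 12 * al * be^2 * Pp^2 * (Pp*(r1*r2+r1*r3+r2*r3)) - 8 * al * be^2 * Pp^3 + 4 * al^2 * be * (Pp*(r1*r2+r1*r3+r2*r3))^2 * (Pp*(r1*r2*r3)) + 4 * al^2 * be * (Pp*(r1*r2+r1*r3+r2*r3))^3 - 26 * al^2 * be * Pp * (Pp*(r1*r2*r3))^2 - 45 * al^2 * be * Pp * (Pp*(r1*r2+r1*r3+r2*r3)) * (Pp*(r1*r2*r3)) - 19 * al^2 * be * Pp * (Pp*(r1*r2+r1*r3+r2*r3))^2 + 52 * al^2 * be * Pp^2 * (Pp*(r1*r2*r3)) + 32 * al^2 * be * Pp^2 * (Pp*(r1*r2+r1*r3+r2*r3)) - 16 * al^2 * be * Pp^3 +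 8 * al^3 * (Pp*(r1*r2*r3))^3 + 36 * al^3 * (Pp*(r1*r2+r1*r3+r2*r3)) * (Pp*(r1*r2*r3))^2 + 48 * al^3 * (Pp*(r1*r2+r1*r3+r2*r3))^2 * (Pp*(r1*r2*r3)) + 16 * al^3 * (Pp*(r1*r2+r1*r3+r2*r3))^3 - 3 * al^3 * Pp * (Pp*(r1*r2*r3))^2 - 12 * al^3 * Pp * (Pp*(r1*r2+r1*r3+r2*r3)) * (Pp*(r1*r2*r3)) - 12 * al^3 * Pp * (Pp*(r1*r2+r1*r3+r2*r3))^2"
  unfolding assms gg_def by Groebner_Basis.algebra

lemma prod_id:
  fixes r1 r2 r3 Pp Qq al be :: "'b::field"
  assumes e1: "r1+r2+r3 = -2" and e2: "Pp*(r1*r2+r1*r3+r2*r3) = -2*Qq" and e3: "Pp*(r1*r2*r3) = Qq"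
  shows "Pp^3 * (gg al be r1 * gg al be r2 * gg al be r3) =
    - (be^3*Pp^2*Qq + be^3*Pp^3 + 8*al*be^2*Pp*Qq^2 + 15*al*be^2*Pp^2*Qq + 8*al*be^2*Pp^3
       + 16*al^2*be*Qq^3 + 12*al^2*be*Pp*Qq^2 + 12*al^2*be*Pp^2*Qq + 16*al^2*be*Pp^3 + 27*al^3*Pp*Qq^2)"
proof -
  have r3: "r3 = -2-r1-r2" using e1 by (simp add: algebra_simps)
  show ?thesis
    unfolding prod_id0[OF r3] e2 e3 by Groebner_Basis.algebra
qed

definition DD :: "'b::field \<Rightarrow> 'b \<Rightarrow> 'b \<Rightarrow> 'b \<Rightarrow> 'b \<Rightarrow> 'b \<Rightarrow> 'b \<Rightarrow> 'b" where
  "DD a1 a2 a3 a4 a5 a6 a7 =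
     a2^4 * a3^5 * a4 * a6 + 8 * a1 * a2^2 * a3^4 * a4^2 * a6^2
   + 16 * a1^2 * a3^3 * a4^3 * a6^3 + a2^5 * a3^4 * a5 * a7
   + 15 * a1 * a2^3 * a3^3 * a4 * a5 * a6 * a7
   + 12 * a1^2 * a2 * a3^2 * a4^2 * a5 * a6^2 * a7
   + 8 * a1 * a2^4 * a3^2 * a5^2 * a7^2
   + 12 * a1^2 * a2^2 * a3 * a4 * a5^2 * a6 * a7^2
   + 27 * a1^3 * a4^2 * a5^2 * a6^2 * a7^2
   + 16 * a1^2 * a2^3 * a5^3 * a7^3"

lemma H_DD:
  fixes c1 c2 c3 c4 c5 c6 c7 :: "'b::field"
  shows "- ((c2*c3^2)^3*(c2*c5*c7)^2*(c3*c4*c6) + (c2*c3^2)^3*(c2*c5*c7)^3 + 8*(c1*c5*c7)*(c2*c3^2)^2*(c2*c5*c7)*(c3*c4*c6)^2 + 15*(c1*c5*c7)*(c2*c3^2)^2*(c2*c5*c7)^2*(c3*c4*c6) + 8*(c1*c5*c7)*(c2*c3^2)^2*(c2*c5*c7)^3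
       + 16*(c1*c5*c7)^2*(c2*c3^2)*(c3*c4*c6)^3 + 12*(c1*c5*c7)^2*(c2*c3^2)*(c2*c5*c7)*(c3*c4*c6)^2 + 12*(c1*c5*c7)^2*(c2*c3^2)*(c2*c5*c7)^2*(c3*c4*c6) + 16*(c1*c5*c7)^2*(c2*c3^2)*(c2*c5*c7)^3 + 27*(c1*c5*c7)^3*(c2*c5*c7)*(c3*c4*c6)^2)
   = - (c2*c3^2*c5^2*c7^2) * DD c1 c2 c3 c4 c5 c6 c7"
  unfolding DD_def by Groebner_Basis.algebra


lemma num_cancel:
  fixes x y :: "'b::field_char_0"
  assumes "numeral n * (x - y) = 0"
  shows "x = y"
  using assms by simp

lemma sing_imp:
  fixes c1 c2 c3 c4 c5 c6 c7 x0 x1 x2 x3 x4 :: "'b::{alg_closed_field,field_char_0}"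
  assumes nz: "x0 \<noteq> 0 \<or> x1 \<noteq> 0 \<or> x2 \<noteq> 0 \<or> x3 \<noteq> 0 \<or> x4 \<noteq> 0"
  and e0: "3*c1*x0^2 + c2*x1*x4 + c3*x2*x3 = 0"
  and e1: "c2*x0*x4 + 2*c4*x1*x3 + c5*x2^2 = 0"
  and e2: "c3*x0*x3 + 2*c5*x1*x2 + c6*x4^2 = 0"
  and e3: "c3*x0*x2 + c4*x1^2 + 2*c7*x3*x4 = 0"
  and e4: "c2*x0*x1 + 2*c6*x2*x4 + c7*x3^2 = 0"
  shows "c1*c4*c5*c6*c7*DD c1 c2 c3 c4 c5 c6 c7 = 0"
proof (rule ccontr)
  assume "c1*c4*c5*c6*c7*DD c1 c2 c3 c4 c5 c6 c7 \<noteq> 0"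
  then have c1: "c1 \<noteq> 0" and c4: "c4 \<noteq> 0" and c5: "c5 \<noteq> 0" and c6: "c6 \<noteq> 0"
    and c7: "c7 \<noteq> 0" and Dn: "DD c1 c2 c3 c4 c5 c6 c7 \<noteq> 0" by auto
  define A where "A = c4*x1^2*x3"
  define B where "B = c5*x1*x2^2"
  have h1: "c2*x0*x1*x4 + 2*A + B = 0" unfolding A_def B_def using e1 by Groebner_Basis.algebra
  have h2: "c3*x0*x2*x3 + 2*B + c6*x2*x4^2 = 0" unfolding A_def B_def using e2 by Groebner_Basis.algebra
  have h3: "c3*x0*x2*x3 + A + 2*(c7*x3^2*x4) = 0" unfolding A_def B_def using e3 by Groebner_Basis.algebra
  have h4: "c2*x0*x1*x4 + 2*(c6*x2*x4^2) + c7*x3^2*x4 = 0" using e4 by Groebner_Basis.algebra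
  have h0: "3*(c1*x0^3) + c2*x0*x1*x4 + c3*x0*x2*x3 = 0" using e0 by Groebner_Basis.algebra
  have "5*(c7*x3^2*x4 - B) = 0" using h1 h2 h3 h4 by Groebner_Basis.algebra
  then have M7: "c7*x3^2*x4 = B" by (rule num_cancel)
  have "5*(c6*x2*x4^2 - A) = 0" using h1 h2 h3 h4 by Groebner_Basis.algebra
  then have M6: "c6*x2*x4^2 = A" by (rule num_cancel)
  have M2: "c2*x0*x1*x4 = -(2*A+B)" using h1 by Groebner_Basis.algebra
  have M3: "c3*x0*x2*x3 = -(A+2*B)" using h2 M6 by Groebner_Basis.algebra
  have "3*(c1*x0^3 - (A+B)) = 0" using h0 M2 M3 by Groebner_Basis.algebra
  then have M1: "c1*x0^3 = A+B" by (rule num_cancel)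
  have x0: "x0 \<noteq> 0"
  proof
    assume x0: "x0 = 0"
    then have "A+B = 0" "2*A+B = 0" using M1 M2 by auto
    then have AB: "A = 0" "B = 0" by Groebner_Basis.algebra+
    have x1: "x1 = 0"
    proof (rule ccontr)
      assume x1: "x1 \<noteq> 0"
      then have "x3 = 0" "x2 = 0" using AB c4 c5 unfolding A_def B_def by auto
      then show False using e3 x0 x1 c4 by simp
    qed
    have x2: "x2 = 0" using e1 x0 x1 c5 by simp
    have x4: "x4 = 0" using e2 x0 x2 c6 by simp
    have x3: "x3 = 0" using e4 x0 x1 x2 c7 by simp
    show False using nz x0 x1 x2 x3 x4 by simp
  qed
  have x1: "x1 \<noteq> 0"
  proof
    assume "x1 = 0" then have "A = 0" "B = 0" unfolding A_def B_def by auto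
    then show False using M1 x0 c1 by simp
  qed
  have x2: "x2 \<noteq> 0"
  proof
    assume "x2 = 0" then have "A = 0" "B = 0" using M6 unfolding B_def by auto
    then show False using M1 x0 c1 by simp
  qed
  have x3: "x3 \<noteq> 0"
  proof
    assume "x3 = 0" then have "A = 0" "B = 0" using M7 unfolding A_def by auto
    then show False using M1 x0 c1 by simp
  qed
  have x4: "x4 \<noteq> 0"
  proof
    assume "x4 = 0" then have "A = 0" "B = 0" using M6 M7 by auto
    then show False using M1 x0 c1 by simp
  qed
  have An: "A \<noteq> 0" unfolding A_def using c4 x1 x3 by simp
  have Bn: "B \<noteq> 0" unfolding B_def using c5 x1 x2 by simp
  show False
  proof (cases "c2 = 0")
    case True
    have p1: "c5*c7*(c4*x1^2*x3)*(c6*x2*x4^2)*(c3*x0*x2*x3) = c3*c4*c6*(c5*x1*x2^2)*(c7*x3^2*x4)*(x0*x1*x4)"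
      by Groebner_Basis.algebra
    have p2: "c1*c5*c7*(x0*x1*x4)*(c3*x0*x2*x3)^2 = c3^2*(c1*x0^3)*(c5*x1*x2^2)*(c7*x3^2*x4)"
      by Groebner_Basis.algebra
    have BA: "B = -2*A" using M2 True by Groebner_Basis.algebra
    have q1: "3*c5*c7*A = 4*c3*c4*c6*(x0*x1*x4)"
    proof -
      have "A^2*(3*c5*c7*A - 4*c3*c4*c6*(x0*x1*x4)) = 0"
        using p1 M6 M7 M3 BA unfolding A_def[symmetric] B_def[symmetric] by Groebner_Basis.algebra
      then show ?thesis using An by simp
    qed
    have q2: "9*c1*c5*c7*(x0*x1*x4) = -4*c3^2*A"
    proof -
      have "A^2*(9*c1*c5*c7*(x0*x1*x4) + 4*c3^2*A) = 0"
        using p2 M1 M7 M3 BA unfolding A_def[symmetric] B_def[symmetric] by Groebner_Basis.algebra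
      then have "9*c1*c5*c7*(x0*x1*x4) + 4*c3^2*A = 0" using An by simp
      then show ?thesis by Groebner_Basis.algebra
    qed
    have "A*(27*c1*c5^2*c7^2 + 16*c3^3*c4*c6) = 0" using q1 q2 by Groebner_Basis.algebra
    then have "27*c1*c5^2*c7^2 + 16*c3^3*c4*c6 = 0" using An by simp
    then have "DD c1 c2 c3 c4 c5 c6 c7 = 0" unfolding DD_def using True by Groebner_Basis.algebra
    then show False using Dn by simp
  next
    case c2: False
    show False
    proof (cases "c3 = 0")
      case True
      have p1: "c2*c5*c7*(c4*x1^2*x3)*(c6*x2*x4^2)*(x0*x2*x3) = c4*c6*(c5*x1*x2^2)*(c7*x3^2*x4)*(c2*x0*x1*x4)"
        by Groebner_Basis.algebra
      have p2: "c1*c5*c7*(c2*x0*x1*x4)*(x0*x2*x3)^2 = c2*(c1*x0^3)*(c5*x1*x2^2)*(c7*x3^2*x4)"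
        by Groebner_Basis.algebra
      have AB: "A = -2*B" using M3 True by Groebner_Basis.algebra
      have q1: "4*c2*c5*c7*(x0*x2*x3) = 3*c4*c6*B"
      proof -
        have "B^2*(4*c2*c5*c7*(x0*x2*x3) - 3*c4*c6*B) = 0"
          using p1 M6 M7 M2 AB unfolding A_def[symmetric] B_def[symmetric] by Groebner_Basis.algebra
        then show ?thesis using Bn by simp
      qed
      have q2: "3*c1*c5*c7*(x0*x2*x3)^2 = -c2*B^2"
      proof -
        have "B*(3*c1*c5*c7*(x0*x2*x3)^2 + c2*B^2) = 0"
          using p2 M1 M7 M2 AB unfolding A_def[symmetric] B_def[symmetric] by Groebner_Basis.algebra
        then have "3*c1*c5*c7*(x0*x2*x3)^2 + c2*B^2 = 0" using Bn by simp
        then show ?thesis by Groebner_Basis.algebra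
      qed
      have "c5*c7*B^2*(27*c1*c4^2*c6^2 + 16*c2^3*c5*c7) = 0" using q1 q2 by Groebner_Basis.algebra
      then have "27*c1*c4^2*c6^2 + 16*c2^3*c5*c7 = 0" using Bn c5 c7 by simp
      then have "DD c1 c2 c3 c4 c5 c6 c7 = 0" unfolding DD_def using True by Groebner_Basis.algebra
      then show False using Dn by simp
    next
      case c3: False
      define Pp where "Pp = c2*c5*c7"
      define Qq where "Qq = c3*c4*c6"
      have Pn: "Pp \<noteq> 0" unfolding Pp_def using c2 c5 c7 by simp
      have p1: "c2*c5*c7*(c4*x1^2*x3)*(c6*x2*x4^2)*(c3*x0*x2*x3) = c3*c4*c6*(c5*x1*x2^2)*(c7*x3^2*x4)*(c2*x0*x1*x4)"
        by Groebner_Basis.algebra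
      have p2: "c1*c5*c7*(c2*x0*x1*x4)*(c3*x0*x2*x3)^2 = c2*c3^2*(c1*x0^3)*(c5*x1*x2^2)*(c7*x3^2*x4)"
        by Groebner_Basis.algebra
      have fh: "Pp*A^3 + 2*Pp*A^2*B - 2*Qq*A*B^2 - Qq*B^3 = 0"
        using p1 M6 M7 M2 M3 unfolding A_def[symmetric] B_def[symmetric] Pp_def Qq_def
        by Groebner_Basis.algebra
      have gh: "c1*c5*c7*(2*A+B)*(A+2*B)^2 + c2*c3^2*(A+B)*B^2 = 0"
        using p2 M1 M7 M2 M3 unfolding A_def[symmetric] B_def[symmetric] by Groebner_Basis.algebra
      define t where "t = A/B"
      have At: "A = t*B" unfolding t_def using Bn by simp
      have "B^3*(Pp*t^3 + 2*Pp*t^2 - 2*Qq*t - Qq) = 0" using fh unfolding At by Groebner_Basis.algebra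
      then have ft: "Pp*t^3 + 2*Pp*t^2 - 2*Qq*t - Qq = 0" using Bn by simp
      have "B^3*gg (c1*c5*c7) (c2*c3^2) t = 0" using gh unfolding At gg_def by Groebner_Basis.algebra
      then have gt: "gg (c1*c5*c7) (c2*c3^2) t = 0" using Bn by simp
      obtain r1 r2 r3 where v1: "r1+r2+r3 = -2" and v2: "Pp*(r1*r2+r1*r3+r2*r3) = -2*Qq"
        and v3: "Pp*(r1*r2*r3) = Qq"
        using vieta_roots[OF Pn] by blast
      have "Pp*(t-r1)*(t-r2)*(t-r3) = 0" using ft vieta_factor[OF v1 v2 v3, of t] by simp
      then have "t = r1 \<or> t = r2 \<or> t = r3" using Pn by simp
      then have "gg (c1*c5*c7) (c2*c3^2) r1 * gg (c1*c5*c7) (c2*c3^2) r2 * gg (c1*c5*c7) (c2*c3^2) r3 = 0"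
        using gt by auto
      then have "Pp^3 * (gg (c1*c5*c7) (c2*c3^2) r1 * gg (c1*c5*c7) (c2*c3^2) r2 * gg (c1*c5*c7) (c2*c3^2) r3) = 0"
        by simp
      then have "- (c2*c3^2*c5^2*c7^2) * DD c1 c2 c3 c4 c5 c6 c7 = 0"
        unfolding prod_id[OF v1 v2 v3] unfolding Pp_def Qq_def H_DD .
      then show False using Dn c2 c3 c5 c7 by simp
    qed
  qed
qed


lemma lift:
  fixes c1 c2 c3 c4 c5 c6 c7 A B m2 m3 :: "'b::{alg_closed_field,field_char_0}"
  assumes c1: "c1 \<noteq> 0" and c4: "c4 \<noteq> 0" and c5: "c5 \<noteq> 0" and c6: "c6 \<noteq> 0" and c7: "c7 \<noteq> 0"
  and An: "A \<noteq> 0" and Bn: "B \<noteq> 0" and m2n: "m2 \<noteq> 0" and m3n: "m3 \<noteq> 0"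
  and s: "A+B = c1" and l2: "c2*m2 = -(2*A+B)" and l3: "c3*m3 = -(A+2*B)"
  and r2: "c5*c7*A^2*m3 = c4*c6*B^2*m2" and r3: "c5*c7*m2*m3^2 = B^2"
  shows "\<exists>x0 x1 x2 x3 x4. (x0 \<noteq> 0 \<or> x1 \<noteq> 0 \<or> x2 \<noteq> 0 \<or> x3 \<noteq> 0 \<or> x4 \<noteq> 0) \<and>
     c1*x0^3 + c2*x0*x1*x4 + c3*x0*x2*x3 + c4*x1^2*x3 + c5*x1*x2^2 + c6*x2*x4^2 + c7*x3^2*x4 = 0 \<and>
     3*c1*x0^2 + c2*x1*x4 + c3*x2*x3 = 0 \<and>
     c2*x0*x4 + 2*c4*x1*x3 + c5*x2^2 = 0 \<and>
     c3*x0*x3 + 2*c5*x1*x2 + c6*x4^2 = 0 \<and>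
     c3*x0*x2 + c4*x1^2 + 2*c7*x3*x4 = 0 \<and>
     c2*x0*x1 + 2*c6*x2*x4 + c7*x3^2 = 0"
proof -
  define m4 where "m4 = A/c4"
  define m5 where "m5 = B/c5"
  have m4n: "m4 \<noteq> 0" and m5n: "m5 \<noteq> 0" unfolding m4_def m5_def using An Bn c4 c5 by auto
  obtain x1 where x15: "x1^5 = m5*m4^2/m3^2" using nth_root_exists[of 5] by auto
  have x1n: "x1 \<noteq> 0" using x15 m5n m4n m3n by auto
  define x0 :: 'b where "x0 = 1"
  define x2 where "x2 = x1^2*m3/m4"
  define x3 where "x3 = m4/x1^2"
  define x4 where "x4 = m2/x1"
  have x2n: "x2 \<noteq> 0" and x3n: "x3 \<noteq> 0" and x4n: "x4 \<noteq> 0"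
    unfolding x2_def x3_def x4_def using x1n m3n m4n m2n by auto
  have AA: "A^2 = c4*c6*m2^2*m3"
  proof -
    have "B^2*(A^2 - c4*c6*m2^2*m3) = 0" using r2 r3 by Groebner_Basis.algebra
    then show ?thesis using Bn by simp
  qed
  have k1: "c1*x0^3 = A+B" unfolding x0_def using s by simp
  have k2: "c2*x0*x1*x4 = -(2*A+B)" unfolding x0_def x4_def using x1n l2 by simp
  have k3: "c3*x0*x2*x3 = -(A+2*B)" unfolding x0_def x2_def x3_def using x1n m4n l3 by simp
  have k4: "c4*x1^2*x3 = A" unfolding x3_def m4_def using x1n c4 by simp
  have x25: "x2^2*x1 = x1^5*m3^2/m4^2" unfolding x2_def using m4n
    by (simp add: power2_eq_square eval_nat_numeral field_simps)
  have k5: "c5*x1*x2^2 = B"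
  proof -
    have "c5*x1*x2^2 = c5*(x1^5*m3^2/m4^2)" using x25 by (simp add: algebra_simps)
    also have "\<dots> = B" unfolding x15 m5_def using m4n m3n c5 by (simp add: field_simps)
    finally show ?thesis .
  qed
  have k6: "c6*x2*x4^2 = A"
  proof -
    have "c6*x2*x4^2 = c6*m3*m2^2/m4" unfolding x2_def x4_def using x1n m4n
      by (simp add: field_simps power2_eq_square)
    also have "\<dots> = A" unfolding m4_def using AA An c4 by (simp add: field_simps power2_eq_square)
    finally show ?thesis .
  qed
  have k7: "c7*x3^2*x4 = B"
  proof -
    have "c7*x3^2*x4 = c7*m4^2*m2/x1^5" unfolding x3_def x4_def using x1n
      by (simp add: field_simps eval_nat_numeral)
    also have "\<dots> = c7*m2*m3^2/m5" unfolding x15 using m4n m3n m5n by (simp add: field_simps)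
    also have "\<dots> = B" unfolding m5_def using r3 c5 Bn by (simp add: field_simps power2_eq_square)
    finally show ?thesis .
  qed
  have F: "c1*x0^3 + c2*x0*x1*x4 + c3*x0*x2*x3 + c4*x1^2*x3 + c5*x1*x2^2 + c6*x2*x4^2 + c7*x3^2*x4 = 0"
    unfolding k1 k2 k3 k4 k5 k6 k7 by Groebner_Basis.algebra
  have "x0*(3*c1*x0^2 + c2*x1*x4 + c3*x2*x3) = 3*(c1*x0^3) + c2*x0*x1*x4 + c3*x0*x2*x3"
    by Groebner_Basis.algebra
  also have "\<dots> = 0" unfolding k1 k2 k3 by Groebner_Basis.algebra
  finally have E0: "3*c1*x0^2 + c2*x1*x4 + c3*x2*x3 = 0" unfolding x0_def by simp
  have "x1*(c2*x0*x4 + 2*c4*x1*x3 + c5*x2^2) = c2*x0*x1*x4 + 2*(c4*x1^2*x3) + c5*x1*x2^2"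
    by Groebner_Basis.algebra
  also have "\<dots> = 0" unfolding k2 k4 k5 by Groebner_Basis.algebra
  finally have E1: "c2*x0*x4 + 2*c4*x1*x3 + c5*x2^2 = 0" using x1n by simp
  have "x2*(c3*x0*x3 + 2*c5*x1*x2 + c6*x4^2) = c3*x0*x2*x3 + 2*(c5*x1*x2^2) + c6*x2*x4^2"
    by Groebner_Basis.algebra
  also have "\<dots> = 0" unfolding k3 k5 k6 by Groebner_Basis.algebra
  finally have E2: "c3*x0*x3 + 2*c5*x1*x2 + c6*x4^2 = 0" using x2n by simp
  have "x3*(c3*x0*x2 + c4*x1^2 + 2*c7*x3*x4) = c3*x0*x2*x3 + c4*x1^2*x3 + 2*(c7*x3^2*x4)"
    by Groebner_Basis.algebra
  also have "\<dots> = 0" unfolding k3 k4 k7 by Groebner_Basis.algebra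
  finally have E3: "c3*x0*x2 + c4*x1^2 + 2*c7*x3*x4 = 0" using x3n by simp
  have "x4*(c2*x0*x1 + 2*c6*x2*x4 + c7*x3^2) = c2*x0*x1*x4 + 2*(c6*x2*x4^2) + c7*x3^2*x4"
    by Groebner_Basis.algebra
  also have "\<dots> = 0" unfolding k2 k6 k7 by Groebner_Basis.algebra
  finally have E4: "c2*x0*x1 + 2*c6*x2*x4 + c7*x3^2 = 0" using x4n by simp
  show ?thesis
    apply (rule exI[of _ x0], rule exI[of _ x1], rule exI[of _ x2], rule exI[of _ x3], rule exI[of _ x4])
    using F E0 E1 E2 E3 E4 x1n by blast
qed


lemma imp_sing:
  fixes c1 c2 c3 c4 c5 c6 c7 :: "'b::{alg_closed_field,field_char_0}"
  assumes DZ: "c1*c4*c5*c6*c7*DD c1 c2 c3 c4 c5 c6 c7 = 0"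
  shows "\<exists>x0 x1 x2 x3 x4. (x0 \<noteq> 0 \<or> x1 \<noteq> 0 \<or> x2 \<noteq> 0 \<or> x3 \<noteq> 0 \<or> x4 \<noteq> 0) \<and>
     c1*x0^3 + c2*x0*x1*x4 + c3*x0*x2*x3 + c4*x1^2*x3 + c5*x1*x2^2 + c6*x2*x4^2 + c7*x3^2*x4 = 0 \<and>
     3*c1*x0^2 + c2*x1*x4 + c3*x2*x3 = 0 \<and>
     c2*x0*x4 + 2*c4*x1*x3 + c5*x2^2 = 0 \<and>
     c3*x0*x3 + 2*c5*x1*x2 + c6*x4^2 = 0 \<and>
     c3*x0*x2 + c4*x1^2 + 2*c7*x3*x4 = 0 \<and>
     c2*x0*x1 + 2*c6*x2*x4 + c7*x3^2 = 0" (is "\<exists>x0 x1 x2 x3 x4. ?S x0 x1 x2 x3 x4")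
proof -
  consider "c1 = 0" | "c4 = 0" | "c5 = 0" | "c6 = 0" | "c7 = 0"
    | "c1 \<noteq> 0" "c4 \<noteq> 0" "c5 \<noteq> 0" "c6 \<noteq> 0" "c7 \<noteq> 0" "DD c1 c2 c3 c4 c5 c6 c7 = 0"
    using DZ by auto
  then show ?thesis
  proof cases
    case 1 then have "?S 1 0 0 0 0" by simp
    then show ?thesis by blast
  next
    case 2 then have "?S 0 1 0 0 0" by simp
    then show ?thesis by blast
  next
    case 3 then have "?S 0 0 1 0 0" by simp
    then show ?thesis by blast
  next
    case 4 then have "?S 0 0 0 0 1" by simp
    then show ?thesis by blast
  next
    case 5 then have "?S 0 0 0 1 0" by simp
    then show ?thesis by blast
  next
    case 6
    note c1 = 6(1) and c4 = 6(2) and c5 = 6(3) and c6 = 6(4) and c7 = 6(5) and D0 = 6(6)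
    show ?thesis
    proof (cases "c2 = 0")
      case c2: True
      have "c1^2*c4^2*c6^2*(16*c3^3*c4*c6 + 27*c1*c5^2*c7^2) = 0"
        using D0 c2 unfolding DD_def by Groebner_Basis.algebra
      then have key: "16*c3^3*c4*c6 + 27*c1*c5^2*c7^2 = 0" using c1 c4 c6 by simp
      have c3: "c3 \<noteq> 0"
      proof
        assume "c3 = 0"
        then have "27*c1*c5^2*c7^2 = 0" using key by simp
        then show False using c1 c5 c7 by simp
      qed
      show ?thesis
      proof (rule lift[OF c1 c4 c5 c6 c7, of "-c1" "2*c1" "-3*c1*c5*c7/(4*c3*c4*c6)" "-3*c1/c3"])
        show "-c1 \<noteq> 0" "2*c1 \<noteq> 0" "-3*c1*c5*c7/(4*c3*c4*c6) \<noteq> 0" "-3*c1/c3 \<noteq> 0"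
          using c1 c3 c4 c5 c6 c7 by auto
        show "-c1 + 2*c1 = c1" by simp
        show "c2 * (-3*c1*c5*c7/(4*c3*c4*c6)) = - (2 * -c1 + 2*c1)" using c2 by simp
        show "c3 * (-3*c1/c3) = - (-c1 + 2*(2*c1))" using c3 by simp
        show "c5*c7*(-c1)^2*(-3*c1/c3) = c4*c6*(2*c1)^2*(-3*c1*c5*c7/(4*c3*c4*c6))"
          using c3 c4 c6 by (simp add: field_simps)
        have "c5*c7*(-3*c1*c5*c7/(4*c3*c4*c6))*(-3*c1/c3)^2 = -27*c1^3*c5^2*c7^2/(4*c3^3*c4*c6)"
          using c3 c4 c6 by (simp add: field_simps power2_eq_square eval_nat_numeral)
        also have "\<dots> = (2*c1)^2"
        proof -
          have "-27*c1^3*c5^2*c7^2 = (2*c1)^2*(4*c3^3*c4*c6)" using key by Groebner_Basis.algebra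
          then show ?thesis using c3 c4 c6 by (simp add: field_simps)
        qed
        finally show "c5*c7*(-3*c1*c5*c7/(4*c3*c4*c6))*(-3*c1/c3)^2 = (2*c1)^2" .
      qed
    next
      case c2: False
      show ?thesis
      proof (cases "c3 = 0")
        case c3: True
        have "c1^2*c5^2*c7^2*(27*c1*c4^2*c6^2 + 16*c2^3*c5*c7) = 0"
          using D0 c3 unfolding DD_def by Groebner_Basis.algebra
        then have key: "27*c1*c4^2*c6^2 + 16*c2^3*c5*c7 = 0" using c1 c5 c7 by simp
        show ?thesis
        proof (rule lift[OF c1 c4 c5 c6 c7, of "2*c1" "-c1" "-3*c1/c2" "-3*c1*c4*c6/(4*c2*c5*c7)"])
          show "2*c1 \<noteq> 0" "-c1 \<noteq> 0" "-3*c1/c2 \<noteq> 0" "-3*c1*c4*c6/(4*c2*c5*c7) \<noteq> 0"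
            using c1 c2 c4 c5 c6 c7 by auto
          show "2*c1 + -c1 = c1" by simp
          show "c2 * (-3*c1/c2) = - (2 * (2*c1) + -c1)" using c2 by simp
          show "c3 * (-3*c1*c4*c6/(4*c2*c5*c7)) = - (2*c1 + 2 * -c1)" using c3 by simp
          show "c5*c7*(2*c1)^2*(-3*c1*c4*c6/(4*c2*c5*c7)) = c4*c6*(-c1)^2*(-3*c1/c2)"
            using c2 c5 c7 by (simp add: field_simps)
          have "c5*c7*(-3*c1/c2)*(-3*c1*c4*c6/(4*c2*c5*c7))^2 = -27*c1^3*c4^2*c6^2/(16*c2^3*c5*c7)"
            using c2 c5 c7 by (simp add: field_simps power2_eq_square eval_nat_numeral)
          also have "\<dots> = (-c1)^2"
          proof -
            have "-27*c1^3*c4^2*c6^2 = (-c1)^2*(16*c2^3*c5*c7)" using key by Groebner_Basis.algebra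
            then show ?thesis using c2 c5 c7 by (simp add: field_simps)
          qed
          finally show "c5*c7*(-3*c1/c2)*(-3*c1*c4*c6/(4*c2*c5*c7))^2 = (-c1)^2" .
        qed
      next
        case c3: False
        define Pp where "Pp = c2*c5*c7"
        define Qq where "Qq = c3*c4*c6"
        have Pn: "Pp \<noteq> 0" unfolding Pp_def using c2 c5 c7 by simp
        have Qn: "Qq \<noteq> 0" unfolding Qq_def using c3 c4 c6 by simp
        obtain r1 r2 r3 where v1: "r1+r2+r3 = -2" and v2: "Pp*(r1*r2+r1*r3+r2*r3) = -2*Qq"
          and v3: "Pp*(r1*r2*r3) = Qq"
          using vieta_roots[OF Pn] by blast
        have "Pp^3 * (gg (c1*c5*c7) (c2*c3^2) r1 * gg (c1*c5*c7) (c2*c3^2) r2 * gg (c1*c5*c7) (c2*c3^2) r3)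
           = - (c2*c3^2*c5^2*c7^2) * DD c1 c2 c3 c4 c5 c6 c7"
          unfolding prod_id[OF v1 v2 v3] unfolding Pp_def Qq_def H_DD ..
        also have "\<dots> = 0" using D0 by simp
        finally have "gg (c1*c5*c7) (c2*c3^2) r1 * gg (c1*c5*c7) (c2*c3^2) r2 * gg (c1*c5*c7) (c2*c3^2) r3 = 0"
          using Pn by simp
        then obtain t where tr: "t = r1 \<or> t = r2 \<or> t = r3" and gt: "gg (c1*c5*c7) (c2*c3^2) t = 0"
          by auto
        have ft: "Pp*t^3 + 2*Pp*t^2 - 2*Qq*t - Qq = 0"
          using vieta_factor[OF v1 v2 v3, of t] tr by auto
        have g': "c1*c5*c7*(2*t+1)*(t+2)^2 + c2*c3^2*(t+1) = 0" using gt unfolding gg_def by simp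
        have t1: "t + 1 \<noteq> 0"
        proof
          assume h: "t + 1 = 0"
          then have "t = -1" by (simp add: eq_neg_iff_add_eq_0)
          then have "c1*c5*c7 = 0" using g' by simp
          then show False using c1 c5 c7 by simp
        qed
        have t0: "t \<noteq> 0" using ft Qn by auto
        have t2: "2*t + 1 \<noteq> 0"
        proof
          assume h: "2*t + 1 = 0"
          have "8*(Pp*t^3 + 2*Pp*t^2 - 2*Qq*t - Qq) = Pp*((2*t)^3 + 4*(2*t)^2) - 8*Qq*(2*t+1)"
            by Groebner_Basis.algebra
          moreover have "2*t = -1" using h by (simp add: eq_neg_iff_add_eq_0)
          ultimately have "8*(Pp*t^3 + 2*Pp*t^2 - 2*Qq*t - Qq) = 3*Pp" using h by simp
          then show False using ft Pn by simp
        qed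
        have t3: "t + 2 \<noteq> 0"
        proof
          assume h: "t + 2 = 0"
          then have "t = -2" by (simp add: eq_neg_iff_add_eq_0)
          then have "3*Qq = 0" using ft by simp
          then show False using Qn by simp
        qed
        define B where "B = c1/(t+1)"
        define A where "A = t*B"
        have Bn: "B \<noteq> 0" unfolding B_def using c1 t1 by simp
        have An: "A \<noteq> 0" unfolding A_def using t0 Bn by simp
        have AB1: "2*A+B = B*(2*t+1)" unfolding A_def by (simp add: algebra_simps)
        have AB2: "A+2*B = B*(t+2)" unfolding A_def by (simp add: algebra_simps)
        have AB3: "B*(t+1) = c1" unfolding B_def using t1 by simp
        show ?thesis
        proof (rule lift[OF c1 c4 c5 c6 c7 An Bn, of "-(2*A+B)/c2" "-(A+2*B)/c3"])
          show "-(2*A+B)/c2 \<noteq> 0" unfolding AB1 using Bn t2 c2 by simp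
          show "-(A+2*B)/c3 \<noteq> 0" unfolding AB2 using Bn t3 c3 by simp
          show "A + B = c1" unfolding A_def using AB3 by (simp add: algebra_simps)
          show "c2 * (-(2*A+B)/c2) = -(2*A+B)" using c2 by simp
          show "c3 * (-(A+2*B)/c3) = -(A+2*B)" using c3 by simp
          have "B^3*(Pp*t^3 + 2*Pp*t^2 - 2*Qq*t - Qq) = 0" using ft by simp
          then have "c2*c5*c7*A^2*(A+2*B) = c3*c4*c6*B^2*(2*A+B)"
            unfolding A_def Pp_def Qq_def by Groebner_Basis.algebra
          then show "c5*c7*A^2*(-(A+2*B)/c3) = c4*c6*B^2*(-(2*A+B)/c2)"
            using c2 c3 by (simp add: field_simps)
          have "B^3*(c1*c5*c7*(2*t+1)*(t+2)^2 + c2*c3^2*(t+1)) = 0" using g' by simp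
          then have "c5*c7*(2*A+B)*(A+2*B)^2*(B*(t+1)) + c2*c3^2*(t+1)*B^3 = 0"
            unfolding A_def using AB3 by Groebner_Basis.algebra
          then have "(t+1)*(c5*c7*(2*A+B)*(A+2*B)^2*B + c2*c3^2*B^3) = 0"
            by Groebner_Basis.algebra
          then have "c5*c7*(2*A+B)*(A+2*B)^2*B + c2*c3^2*B^3 = 0" using t1 by simp
          then have "B*(c5*c7*(2*A+B)*(A+2*B)^2 + c2*c3^2*B^2) = 0"
            by Groebner_Basis.algebra
          then have "c5*c7*(2*A+B)*(A+2*B)^2 + c2*c3^2*B^2 = 0" using Bn by simp
          then have E: "c5*c7*(2*A+B)*(A+2*B)^2 = -(c2*c3^2*B^2)" by Groebner_Basis.algebra
          have "c5*c7*(-(2*A+B)/c2)*(-(A+2*B)/c3)^2 = -(c5*c7*(2*A+B)*(A+2*B)^2)/(c2*c3^2)"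
            using c2 c3 by (simp add: field_simps power2_eq_square)
          also have "\<dots> = B^2" unfolding E using c2 c3 by (simp add: field_simps)
          finally show "c5*c7*(-(2*A+B)/c2)*(-(A+2*B)/c3)^2 = B^2" .
        qed
      qed
    qed
  qed
qed


lemma partials:
  fixes c x :: "nat \<Rightarrow> 'b::comm_ring_1"
  shows "cubicF_partial c 0 x = 3 * c 1 * x 0 ^ 2 + c 2 * x 1 * x 4 + c 3 * x 2 * x 3"
    and "cubicF_partial c 1 x = c 2 * x 0 * x 4 + 2 * c 4 * x 1 * x 3 + c 5 * x 2 ^ 2"
    and "cubicF_partial c 2 x = c 3 * x 0 * x 3 + 2 * c 5 * x 1 * x 2 + c 6 * x 4 ^ 2"
    and "cubicF_partial c 3 x = c 3 * x 0 * x 2 + c 4 * x 1 ^ 2 + 2 * c 7 * x 3 * x 4"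
    and "cubicF_partial c 4 x = c 2 * x 0 * x 1 + 2 * c 6 * x 2 * x 4 + c 7 * x 3 ^ 2"
  unfolding cubicF_partial_def cubicF_def
  by (simp_all add: algebra_simps power2_eq_square power3_eq_cube)

lemma ex5: "(\<exists>i<(5::nat). P i) \<longleftrightarrow> P 0 \<or> P 1 \<or> P 2 \<or> P 3 \<or> P 4"
  by (auto simp: less_Suc_eq numeral_eq_Suc)

lemma all5: "(\<forall>i<(5::nat). P i) \<longleftrightarrow> P 0 \<and> P 1 \<and> P 2 \<and> P 3 \<and> P 4"
  by (auto simp: less_Suc_eq numeral_eq_Suc)

lemma sing_iff:
  fixes c :: "nat \<Rightarrow> 'b::{alg_closed_field,field_char_0}"
  shows "(\<exists>x :: nat \<Rightarrow> 'b. (\<exists>i<5. x i \<noteq> 0) \<and> cubicF c x = 0 \<and> (\<forall>i<5. cubicF_partial c i x = 0))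
     \<longleftrightarrow> c 1 * c 4 * c 5 * c 6 * c 7 * DD (c 1) (c 2) (c 3) (c 4) (c 5) (c 6) (c 7) = 0"
proof
  assume "\<exists>x :: nat \<Rightarrow> 'b. (\<exists>i<5. x i \<noteq> 0) \<and> cubicF c x = 0 \<and> (\<forall>i<5. cubicF_partial c i x = 0)"
  then obtain x :: "nat \<Rightarrow> 'b" where "(\<exists>i<5. x i \<noteq> 0)" "\<forall>i<5. cubicF_partial c i x = 0" by blast
  then show "c 1 * c 4 * c 5 * c 6 * c 7 * DD (c 1) (c 2) (c 3) (c 4) (c 5) (c 6) (c 7) = 0"
    unfolding ex5 all5 partials by (intro sing_imp[of "x 0" "x 1" "x 2" "x 3" "x 4"]) auto
next
  assume "c 1 * c 4 * c 5 * c 6 * c 7 * DD (c 1) (c 2) (c 3) (c 4) (c 5) (c 6) (c 7) = 0"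
  from imp_sing[OF this] obtain x0 x1 x2 x3 x4 where
    h: "(x0 \<noteq> 0 \<or> x1 \<noteq> 0 \<or> x2 \<noteq> 0 \<or> x3 \<noteq> 0 \<or> x4 \<noteq> 0)"
     "c 1*x0^3 + c 2*x0*x1*x4 + c 3*x0*x2*x3 + c 4*x1^2*x3 + c 5*x1*x2^2 + c 6*x2*x4^2 + c 7*x3^2*x4 = 0"
     "3*c 1*x0^2 + c 2*x1*x4 + c 3*x2*x3 = 0"
     "c 2*x0*x4 + 2*c 4*x1*x3 + c 5*x2^2 = 0"
     "c 3*x0*x3 + 2*c 5*x1*x2 + c 6*x4^2 = 0"
     "c 3*x0*x2 + c 4*x1^2 + 2*c 7*x3*x4 = 0"
     "c 2*x0*x1 + 2*c 6*x2*x4 + c 7*x3^2 = 0" by blast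
  define x :: "nat \<Rightarrow> 'b" where
    "x = (\<lambda>i. if i = 0 then x0 else if i = 1 then x1 else if i = 2 then x2 else if i = 3 then x3 else x4)"
  have "(\<exists>i<5. x i \<noteq> 0) \<and> cubicF c x = 0 \<and> (\<forall>i<5. cubicF_partial c i x = 0)"
    unfolding ex5 all5 partials using h by (simp add: x_def cubicF_def)
  then show "\<exists>x :: nat \<Rightarrow> 'b. (\<exists>i<5. x i \<noteq> 0) \<and> cubicF c x = 0 \<and> (\<forall>i<5. cubicF_partial c i x = 0)"
    by blast
qed

theorem lemma1p1:
  fixes a :: "nat \<Rightarrow> 'k::field_char_0"
  assumes "\<exists>\<zeta>::'k. \<zeta> ^ 5 = 1 \<and> (\<forall>n::nat. 0 < n \<and> n < 5 \<longrightarrow> \<zeta> ^ n \<noteq> 1)"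
  shows "smooth_cubic a \<longleftrightarrow> D7 a \<noteq> 0"
proof -
  define c where "c = (\<lambda>j. to_ac (a j))"
  have "smooth_cubic a \<longleftrightarrow> \<not> (c 1 * c 4 * c 5 * c 6 * c 7 * DD (c 1) (c 2) (c 3) (c 4) (c 5) (c 6) (c 7) = 0)"
    unfolding smooth_cubic_def c_def[symmetric] sing_iff ..
  also have "c 1 * c 4 * c 5 * c 6 * c 7 * DD (c 1) (c 2) (c 3) (c 4) (c 5) (c 6) (c 7) = to_ac (D7 a)"
    unfolding c_def D7_def Delta7_def DD_def by simp
  finally show ?thesis by simp
qed

end
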